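(* Let $\mathcal{H}$ be finite-dimensional, $\mathscr{A}\subseteq\mathfrak{B}(\mathcal{H})$ a $*$-subalgebra, $\mathcal{L}:\mathscr{A}\to\mathscr{A}$ a Lindblad generator, $\mathfrak{S}\subseteq\mathfrak{D}(\mathcal{H})\cap\mathscr{A}$ a set of initial states, and $\mathscr{R}=\mathrm{span}\{e^{\mathcal{L}t}(\rho_0):t\ge0,\rho_0\in\mathfrak{S}\}$ the reachable subspace. Let $\mathscr{V}$ be an operator subspace with $\mathscr{R}\subseteq\mathscr{V}$, let $\Pi_{\mathscr{V}}$ be a (not necessarily orthogonal) projection superoperator onto $\mathscr{V}$, and let $\mathcal{R},\mathcal{J}$ be full-rank factors of $\Pi_\mathscr{V}$, i.e. $\mathcal{R}$ maps onto a space $\mathcal{X}$ with $\dim\mathcal{X}=\dim\mathscr{V}$, $\mathcal{J}:\mathcal{X}\to\mathscr{V}$, $\mathcal{J}\mathcal{R}=\Pi_\mathscr{V}$ and $\mathcal{R}\mathcal{J}=\mathcal{I}$ (identity on $\mathcal{X}$). Define $\mathcal{F}_L\equiv\mathcal{R}\mathcal{L}\mathcal{J}$. Then $$e^{\mathcal{L}t}(\rho_0)=\mathcal{J}e^{\mathcal{F}_Lt}\mathcal{R}(\rho_0)\qquad\forall t\ge0,\ \forall\rho_0\in\mathfrak{S}.$$ Moreover, $\mathscr{V}=\mathscr{R}$ is an operator subspace of minimal dimension for which this identity holds.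
   Context: A Lindblad generator has the form $\mathcal{L}(\rho)=-i[H,\rho]+\sum_u\big(L_u\rho L_u^\dagger-\tfrac12\{L_u^\dagger L_u,\rho\}\big)$ with $H=H^\dagger$. $\mathfrak{D}(\mathcal{H})$ is the set of density operators on $\mathcal{H}$. A projection superoperator is an idempotent linear map on the operator space with image $\mathscr{V}$. *)

theory Defs
  imports "HOL-Analysis.Analysis"
begin

text \<open>Operators on the finite-dimensional Hilbert space H = complex^'n are the
  complex matrices complex^'n^'n.  Superoperators are maps on this type.\<close>

type_synonym 'n op = "complex^'n^'n"

definition cscale :: "complex \<Rightarrow> 'n::finite op \<Rightarrow> 'n op" where
  "cscale c A = (\<chi> i j. c * A $ i $ j)"

definition adj :: "'n::finite op \<Rightarrow> 'n op" where
  "adj A = (\<chi> i j. cnj (A $ j $ i))"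

definition mtrace :: "'n::finite op \<Rightarrow> complex" where
  "mtrace A = (\<Sum>i\<in>UNIV. A $ i $ i)"

definition psd :: "'n::finite op \<Rightarrow> bool" where
  "psd A \<longleftrightarrow> (\<forall>x::complex^'n. (\<Sum>i\<in>UNIV. cnj (x $ i) * (A *v x) $ i) \<in> \<real>
                 \<and> 0 \<le> Re (\<Sum>i\<in>UNIV. cnj (x $ i) * (A *v x) $ i))"

text \<open>The set of density operators D(H).\<close>
definition density_ops :: "'n::finite op set" where
  "density_ops = {\<rho>. psd \<rho> \<and> mtrace \<rho> = 1}"

text \<open>Lindblad generator (finitely many jump operators, H Hermitian).\<close>
definition is_lindblad :: "('n::finite op \<Rightarrow> 'n op) \<Rightarrow> bool" where
  "is_lindblad L \<longleftrightarrow> (\<exists>(H::'n op) (Ls::'n op list). adj H = H \<and>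
     (\<forall>\<rho>. L \<rho> = cscale (- \<i>) (H ** \<rho> - \<rho> ** H)
        + sum_list (map (\<lambda>Lu. Lu ** \<rho> ** adj Lu
              - cscale (1/2) (adj Lu ** Lu ** \<rho> + \<rho> ** (adj Lu ** Lu))) Ls)))"

text \<open>*-subalgebra of B(H): complex subspace closed under products and adjoints.\<close>
definition star_subalgebra :: "'n::finite op set \<Rightarrow> bool" where
  "star_subalgebra A \<longleftrightarrow> module.subspace cscale A
     \<and> (\<forall>x\<in>A. \<forall>y\<in>A. x ** y \<in> A) \<and> (\<forall>x\<in>A. adj x \<in> A)"

text \<open>Exponential e^{t f} of a (linear) map f, via the exponential series.\<close>
definition lexp :: "real \<Rightarrow> ('a::real_normed_vector \<Rightarrow> 'a) \<Rightarrow> 'a \<Rightarrow> 'a" where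
  "lexp t f x = (\<Sum>n. (t ^ n / fact n) *\<^sub>R (f ^^ n) x)"

text \<open>Reachable subspace span{e^{Lt} rho0 : t >= 0, rho0 in S} (complex span).\<close>
definition reach :: "('n::finite op \<Rightarrow> 'n op) \<Rightarrow> 'n op set \<Rightarrow> 'n op set" where
  "reach L S = module.span cscale {lexp t L \<rho>0 | t \<rho>0. t \<ge> 0 \<and> \<rho>0 \<in> S}"

text \<open>Pi is a (not necessarily orthogonal) projection superoperator onto V, and
  R : B(H) -> X = complex^'k, J : X -> V are full-rank factors of Pi.\<close>
definition proj_factors ::
  "'n::finite op set \<Rightarrow> ('n op \<Rightarrow> 'n op) \<Rightarrow> ('n op \<Rightarrow> complex^'k::finite)
     \<Rightarrow> (complex^'k \<Rightarrow> 'n op) \<Rightarrow> bool" where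
  "proj_factors V P R J \<longleftrightarrow>
     module.subspace cscale V
   \<and> Vector_Spaces.linear cscale cscale P \<and> P \<circ> P = P \<and> range P = V
   \<and> Vector_Spaces.linear cscale (*s) R \<and> Vector_Spaces.linear (*s) cscale J
   \<and> surj R \<and> CARD('k) = vector_space.dim cscale V
   \<and> range J \<subseteq> V \<and> J \<circ> R = P \<and> R \<circ> J = id"

end

theory Submission
  imports Defs
begin

lemma scaleR_cscale: "r *\<^sub>R (A::'n::finite op) = cscale (complex_of_real r) A"
  by (simp add: cscale_def vec_eq_iff) (simp add: scaleR_conv_of_real)

lemma scaleR_vs: "r *\<^sub>R (x::complex^'k::finite) = complex_of_real r *s x"
  by (simp add: vec_eq_iff) (simp add: scaleR_conv_of_real)

lemma module_cscale: "module (cscale :: complex \<Rightarrow> 'n::finite op \<Rightarrow> _)"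
  unfolding module_def cscale_def by (simp add: vec_eq_iff algebra_simps)

lemma vs_cscale: "vector_space (cscale :: complex \<Rightarrow> 'n::finite op \<Rightarrow> _)"
  using module_cscale module_iff_vector_space by blast

lemma lin_cc: "Vector_Spaces.linear cscale cscale (P::'n::finite op \<Rightarrow> 'n op) \<Longrightarrow> linear P"
  apply (rule linearI)
  apply (simp add: linear_iff_module_hom module_hom.add)
  by (metis scaleR_cscale linear_iff_module_hom module_hom.scale)

lemma lin_cs: "Vector_Spaces.linear cscale (*s) (P::'n::finite op \<Rightarrow> complex^'k::finite) \<Longrightarrow> linear P"
  apply (rule linearI)
  apply (simp add: linear_iff_module_hom module_hom.add)
  by (metis scaleR_cscale scaleR_vs linear_iff_module_hom module_hom.scale)

lemma lin_sc: "Vector_Spaces.linear (*s) cscale (P::complex^'k::finite \<Rightarrow> 'n::finite op) \<Longrightarrow> linear P"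
  apply (rule linearI)
  apply (simp add: linear_iff_module_hom module_hom.add)
  by (metis scaleR_cscale scaleR_vs linear_iff_module_hom module_hom.scale)

lemma lin_left: "linear f \<Longrightarrow> linear (\<lambda>x. (A::'n::finite op) ** f x)"
  apply (rule linearI)
   apply (simp add: linear_add matrix_add_ldistrib)
  by (simp add: linear_scale vec_eq_iff matrix_matrix_mult_def scaleR_sum_right)

lemma lin_right: "linear f \<Longrightarrow> linear (\<lambda>x. f x ** (A::'n::finite op))"
  apply (rule linearI)
   apply (simp add: linear_add vec_eq_iff matrix_matrix_mult_def distrib_right sum.distrib)
  by (simp add: linear_scale vec_eq_iff matrix_matrix_mult_def scaleR_sum_right)

lemma lin_cs2: "linear f \<Longrightarrow> linear (\<lambda>x. cscale c (f x :: 'n::finite op))"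
  apply (rule linearI)
   apply (simp add: linear_add cscale_def vec_eq_iff algebra_simps)
  by (simp add: linear_scale cscale_def vec_eq_iff algebra_simps)

lemma lin_sumlist: "(\<And>u. linear (g u)) \<Longrightarrow> linear (\<lambda>x. sum_list (map (\<lambda>u. g u x) Ls))"
proof (induction Ls)
  case Nil then show ?case by (simp add: linear_zero)
next
  case (Cons a Ls) then show ?case by (simp add: linear_compose_add)
qed

lemma lindblad_linear: "is_lindblad L \<Longrightarrow> linear L"
proof -
  assume "is_lindblad L"
  then obtain H Ls where eq: "\<And>\<rho>. L \<rho> = cscale (- \<i>) (H ** \<rho> - \<rho> ** H)
        + sum_list (map (\<lambda>Lu. Lu ** \<rho> ** adj Lu
              - cscale (1/2) (adj Lu ** Lu ** \<rho> + \<rho> ** (adj Lu ** Lu))) Ls)"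
    unfolding is_lindblad_def by blast
  have "L = (\<lambda>\<rho>. cscale (- \<i>) (H ** \<rho> - \<rho> ** H)
        + sum_list (map (\<lambda>Lu. Lu ** \<rho> ** adj Lu
              - cscale (1/2) (adj Lu ** Lu ** \<rho> + \<rho> ** (adj Lu ** Lu))) Ls))"
    using eq by blast
  moreover have "linear \<dots>"
    apply (rule linear_compose_add)
     apply (rule lin_cs2, rule linear_compose_sub, rule lin_left[OF linear_ident], rule lin_right[OF linear_ident])
    apply (rule lin_sumlist)
    apply (rule linear_compose_sub)
     apply (rule lin_right[OF lin_left[OF linear_ident]])
    apply (rule lin_cs2[OF linear_compose_add[OF lin_left[OF linear_ident] lin_right[OF linear_ident]]])
    done
  ultimately show ?thesis by simp
qed


lemma exp_summable:
  fixes f :: "'a::banach \<Rightarrow> 'a"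
  assumes "bounded_linear f"
  shows "summable (\<lambda>n. (t ^ n / fact n) *\<^sub>R (f ^^ n) x)"
proof -
  obtain K where K: "K > 0" "\<And>x. norm (f x) \<le> norm x * K"
    using bounded_linear.pos_bounded[OF assms] by blast
  have nb: "norm ((f ^^ n) x) \<le> norm x * K ^ n" for n
  proof (induction n)
    case 0 then show ?case by simp
  next
    case (Suc n)
    have "norm ((f ^^ Suc n) x) \<le> norm ((f ^^ n) x) * K" using K(2) by simp
    also have "\<dots> \<le> norm x * K ^ n * K" using Suc K(1) by (simp add: mult_right_mono)
    finally show ?case by (simp add: algebra_simps)
  qed
  have s: "summable (\<lambda>n. norm x * (inverse (fact n) * (\<bar>t\<bar> * K) ^ n))"
    by (intro summable_mult summable_exp)
  show ?thesis
  proof (rule summable_comparison_test'[OF s])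
    fix n :: nat
    have "norm ((t ^ n / fact n) *\<^sub>R (f ^^ n) x) = \<bar>t\<bar> ^ n / fact n * norm ((f ^^ n) x)"
      by (simp add: power_abs)
    also have "\<dots> \<le> \<bar>t\<bar> ^ n / fact n * (norm x * K ^ n)"
      by (intro mult_left_mono nb) auto
    also have "\<dots> = norm x * (inverse (fact n) * (\<bar>t\<bar> * K) ^ n)"
      by (simp add: power_mult_distrib divide_inverse mult_ac)
    finally show "norm ((t ^ n / fact n) *\<^sub>R (f ^^ n) x) \<le> norm x * (inverse (fact n) * (\<bar>t\<bar> * K) ^ n)" .
  qed
qed



lemma powser_zero_head:
  fixes a :: "nat \<Rightarrow> real"
  assumes "\<And>x. summable (\<lambda>n. a n * x ^ n)"
    and "\<And>x. x > 0 \<Longrightarrow> (\<Sum>n. a n * x ^ n) = 0"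
  shows "a 0 = 0"
proof -
  define g where "g = (\<lambda>x::real. \<Sum>n. a n * x ^ n)"
  have "isCont g 0" unfolding g_def by (rule isCont_powser_converges_everywhere[OF assms(1)])
  then have "(g \<longlongrightarrow> g 0) (at_right 0)"
    unfolding isCont_def by (rule tendsto_mono[OF at_le[OF subset_UNIV]])
  moreover have "eventually (\<lambda>x. g x = 0) (at_right 0)"
  proof -
    have "eventually (\<lambda>x. x > (0::real)) (at_right 0)"
      by (simp add: eventually_at_filter)
    then show ?thesis using assms(2) unfolding g_def by (simp add: eventually_mono)
  qed
  ultimately have "((\<lambda>_. 0) \<longlongrightarrow> g 0) (at_right (0::real))"
    by (rule Lim_transform_eventually[where f=g and g="\<lambda>_. 0"])
  from tendsto_unique[OF trivial_limit_at_right_real this tendsto_const] have "g 0 = 0" .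
  then show ?thesis unfolding g_def using powser_zero[of a] by simp
qed

lemma powser_zero_coeffs:
  fixes a :: "nat \<Rightarrow> real"
  assumes "\<And>x. summable (\<lambda>n. a n * x ^ n)"
    and "\<And>x. x > 0 \<Longrightarrow> (\<Sum>n. a n * x ^ n) = 0"
  shows "a n = 0"
  using assms
proof (induction n arbitrary: a)
  case 0
  then show ?case by (rule powser_zero_head)
next
  case (Suc n)
  have a0: "a 0 = 0" using powser_zero_head Suc.prems by blast
  have sb: "summable (\<lambda>n. a (Suc n) * x ^ n)" for x
    using powser_split_head(3)[OF Suc.prems(1)] .
  have zb: "(\<Sum>n. a (Suc n) * x ^ n) = 0" if "x > 0" for x
  proof -
    have "(\<Sum>n. a (Suc n) * x ^ n) * x = 0"
      using powser_split_head(2)[OF Suc.prems(1)[of x]] Suc.prems(2)[OF that] a0 by simp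
    then show ?thesis using that by simp
  qed
  show ?case using Suc.IH[of "\<lambda>n. a (Suc n)"] sb zb by blast
qed


lemma krylov_in:
  fixes L :: "'a::euclidean_space \<Rightarrow> 'a"
  assumes bl: "bounded_linear L" and W: "subspace W" and inW: "\<And>t. t \<ge> 0 \<Longrightarrow> lexp t L x \<in> W"
  shows "(L ^^ n) x \<in> W"
proof -
  obtain y z where y: "y \<in> span W" and z: "\<And>w. w \<in> span W \<Longrightarrow> orthogonal z w"
      and d: "(L^^n) x = y + z"
    using orthogonal_subspace_decomp_exists[of W "(L^^n) x"] by blast
  have yW: "y \<in> W" using y W by (metis span_eq_iff)
  define a where "a m = (z \<bullet> (L^^m) x) / fact m" for m
  have tm: "z \<bullet> ((t ^ m / fact m) *\<^sub>R (L ^^ m) x) = a m * t ^ m" for t m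
    by (simp add: a_def)
  have sa: "summable (\<lambda>m. a m * t ^ m)" for t
  proof -
    have "summable (\<lambda>m. z \<bullet> ((t ^ m / fact m) *\<^sub>R (L ^^ m) x))"
      using bounded_linear.summable[OF bounded_linear_inner_right exp_summable[OF bl]] .
    then show ?thesis by (simp only: tm)
  qed
  have za: "(\<Sum>m. a m * t ^ m) = 0" if "t > 0" for t
  proof -
    have "(\<Sum>m. a m * t ^ m) = z \<bullet> lexp t L x"
      unfolding lexp_def tm[symmetric]
      by (rule bounded_linear.suminf[OF bounded_linear_inner_right exp_summable[OF bl], symmetric])
    also have "\<dots> = 0" using z[OF span_base[OF inW]] that by (simp add: orthogonal_def)
    finally show ?thesis .
  qed
  have "a n = 0" by (rule powser_zero_coeffs[OF sa za])
  then have "z \<bullet> (L^^n) x = 0" by (simp add: a_def)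
  moreover have "z \<bullet> y = 0" using z[OF y] by (simp add: orthogonal_def inner_commute)
  ultimately have "z \<bullet> z = 0" using d by (simp add: inner_add_right)
  then have "z = 0" by simp
  then show ?thesis using d yW by simp
qed


lemma real_subspace: "module.subspace cscale (V::'n::finite op set) \<Longrightarrow> subspace V"
  unfolding subspace_def module.subspace_def[OF module_cscale]
  by (simp add: scaleR_cscale)

theorem theorem1:
  fixes A :: "'n::finite op set"
    and L :: "'n op \<Rightarrow> 'n op"
    and S V :: "'n op set"
    and P :: "'n op \<Rightarrow> 'n op"
    and R :: "'n op \<Rightarrow> complex^'k::finite"
    and J :: "complex^'k \<Rightarrow> 'n op"
  assumes "star_subalgebra A"
    and "is_lindblad L" and "L ` A \<subseteq> A"
    and "S \<subseteq> density_ops \<inter> A"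
    and "module.subspace cscale V" and "reach L S \<subseteq> V"
    and "proj_factors V P R J"
  shows "(\<forall>t \<ge> 0. \<forall>\<rho>0 \<in> S. lexp t L \<rho>0 = J (lexp t (R \<circ> L \<circ> J) (R \<rho>0)))
    \<and> (\<forall>(V'::'n op set) P' (R'::'n op \<Rightarrow> complex^'m::finite) J'.
          proj_factors V' P' R' J'
          \<and> (\<forall>t \<ge> 0. \<forall>\<rho>0 \<in> S. lexp t L \<rho>0 = J' (lexp t (R' \<circ> L \<circ> J') (R' \<rho>0)))
          \<longrightarrow> vector_space.dim cscale (reach L S) \<le> vector_space.dim cscale V')"
proof (intro conjI allI impI ballI)
  have pf: "module.subspace cscale V" "Vector_Spaces.linear cscale cscale P" "P \<circ> P = P" "range P = V"
     "Vector_Spaces.linear cscale (*s) R" "Vector_Spaces.linear (*s) cscale J"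
     "J \<circ> R = P"
    using assms(7) unfolding proj_factors_def by auto
  have blL: "bounded_linear L" using lindblad_linear[OF assms(2)] linear_conv_bounded_linear by blast
  have blR: "bounded_linear R" using lin_cs[OF pf(5)] linear_conv_bounded_linear by blast
  have blJ: "bounded_linear J" using lin_sc[OF pf(6)] linear_conv_bounded_linear by blast
  define F where "F = R \<circ> L \<circ> J"
  have blF: "bounded_linear F" unfolding F_def o_def
    by (intro bounded_linear_compose[OF blR] bounded_linear_compose[OF blL] blJ)
  have Vsub: "subspace V" using real_subspace[OF pf(1)] .
  have PV: "P v = v" if vV: "v \<in> V" for v
  proof -
    obtain w where "v = P w" using vV pf(4) by blast
    then show ?thesis using pf(3) by (metis comp_apply)
  qed
  have JR: "J (R v) = P v" for v using pf(7) by (metis comp_apply)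
  fix t :: real and \<rho>0
  assume t: "t \<ge> 0" and r0: "\<rho>0 \<in> S"
  have inV: "lexp s L \<rho>0 \<in> V" if "s \<ge> 0" for s
  proof -
    have "lexp s L \<rho>0 \<in> reach L S"
      unfolding reach_def using that r0
      by (intro module.span_base[OF module_cscale]) blast
    then show ?thesis using assms(6) by blast
  qed
  have kry: "(L ^^ n) \<rho>0 \<in> V" for n by (rule krylov_in[OF blL Vsub inV])
  have JF: "J ((F ^^ n) (R \<rho>0)) = (L ^^ n) \<rho>0" for n
  proof (induction n)
    case 0
    show ?case using JR PV kry[of 0] by simp
  next
    case (Suc n)
    have "J ((F ^^ Suc n) (R \<rho>0)) = P (L (J ((F ^^ n) (R \<rho>0))))"
      by (simp add: F_def JR)
    also have "\<dots> = P ((L ^^ Suc n) \<rho>0)" using Suc by simp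
    also have "\<dots> = (L ^^ Suc n) \<rho>0" using PV kry by blast
    finally show ?case .
  qed
  have "J (lexp t F (R \<rho>0)) = (\<Sum>n. J ((t ^ n / fact n) *\<^sub>R (F ^^ n) (R \<rho>0)))"
    unfolding lexp_def by (rule bounded_linear.suminf[OF blJ exp_summable[OF blF]])
  also have "\<dots> = lexp t L \<rho>0"
    unfolding lexp_def using JF linear_scale[OF lin_sc[OF pf(6)]] by simp
  finally show "lexp t L \<rho>0 = J (lexp t (R \<circ> L \<circ> J) (R \<rho>0))" unfolding F_def by simp
next
  fix V' :: "'n op set" and P' and R' :: "'n op \<Rightarrow> complex^'m::finite" and J'
  assume a: "proj_factors V' P' R' J'
          \<and> (\<forall>t \<ge> 0. \<forall>\<rho>0 \<in> S. lexp t L \<rho>0 = J' (lexp t (R' \<circ> L \<circ> J') (R' \<rho>0)))"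
  have pf: "module.subspace cscale V'" "range P' = V'" "Vector_Spaces.linear (*s) cscale J'"
     "range J' \<subseteq> V'" "J' \<circ> R' = P'" "CARD('m) = vector_space.dim cscale V'"
    using a unfolding proj_factors_def by auto
  have "reach L S \<subseteq> V'"
    unfolding reach_def
  proof (rule module.span_minimal[OF module_cscale _ pf(1)])
    show "{lexp t L \<rho>0 |t \<rho>0. 0 \<le> t \<and> \<rho>0 \<in> S} \<subseteq> V'"
      using a pf(4) by auto
  qed
  also have "V' \<subseteq> range J'" using pf(2) pf(5) by auto
  also have "range J' = module.span cscale (J' ` cart_basis)"
    using module_hom.span_image[OF pf(3)[unfolded linear_iff_module_hom], of cart_basis]
    by (simp add: vec.span_Basis)
  finally have sub: "reach L S \<subseteq> module.span cscale (J' ` cart_basis)" .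
  have "vector_space.dim cscale (reach L S) \<le> card (J' ` (cart_basis :: (complex^'m) set))"
    by (rule vector_space.dim_le_card[OF vs_cscale sub]) (simp add: vec.finite_Basis)
  also have "\<dots> \<le> card (cart_basis :: (complex^'m) set)" by (rule card_image_le) (simp add: vec.finite_Basis)
  also have "\<dots> = vector_space.dim cscale V'" using pf(6) by (simp add: card_cart_basis)
  finally show "vector_space.dim cscale (reach L S) \<le> vector_space.dim cscale V'" .
qed

end
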